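(* Let $(\Sigma_A,T)$ be a topologically mixing one-sided subshift of finite type, $\Psi=\{\psi_n\}_{n\ge1}\in\mathcal F^-(\Sigma_A,T)$, $Q(s)=P(s\Psi)$, equip $\Sigma_A$ with the metric $d_\Psi$, and let $\mu_{\max}$ be the Gibbs measure of the zero potential (the measure of maximal entropy). Then for every $x\in\Sigma_A$, $\underline d_{\mu_{\max}}(x)=-\dfrac{Q(0)}{\liminf_{n\to\infty}\frac1n\psi_n(x)}$ and $\overline d_{\mu_{\max}}(x)=-\dfrac{Q(0)}{\limsup_{n\to\infty}\frac1n\psi_n(x)}$.
   Context: A sequence $\Phi=\{\phi_n\}_{n\ge1}$ of continuous functions on $\Sigma_A$ is almost additive if $|\phi_{n+m}(x)-\phi_n(x)-\phi_m(T^nx)|\le C$; bounded variation if $\sup\{|\phi_n(x)-\phi_n(y)|:x|_n=y|_n\}\le C'$ for all $n$; negative if there is $c>0$ with $\phi_n(x)\le-cn$ and $n\mapsto\phi_n(x)$ decreasing. $\mathcal F^-(\Sigma_A,T)$: negative almost additive potentials with bounded variation. Pressure: $P(\Phi)=\lim_n\frac1n\log\sum_{|w|=n}\exp(\sup_{x\in[w]}\phi_n(x))$. Weak Gibbs metric: $d_\Psi(x,y)=\sup_{z\in[x\wedge y]}\exp(\psi_{|x\wedge y|}(z))$, where $x\wedge y$ is the longest common prefix and $\psi_0:=0$. The measure $\mu_{\max}$ satisfies $\mu_{\max}([x|_n])\asymp\exp(-nQ(0))$ uniformly, with $Q(0)=h_{top}(T)$. Local dimensions: $\underline d_\mu(x)=\liminf_{r\to0}\frac{\log\mu(B(x,r))}{\log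 r}$, $\overline d_\mu(x)=\limsup_{r\to0}\frac{\log\mu(B(x,r))}{\log r}$, balls with respect to $d_\Psi$. *)

theory Defs
  imports "HOL-Analysis.Analysis"
begin

text \<open>One-sided subshift of finite type over the alphabet {0..<k} with 0-1 transition
  matrix A (given as a relation).  Points are sequences nat => nat, with the product
  topology of the discrete space nat (library instance).\<close>

definition SFT :: "nat \<Rightarrow> (nat \<Rightarrow> nat \<Rightarrow> bool) \<Rightarrow> (nat \<Rightarrow> nat) set" where
  "SFT k A = {x. \<forall>i. x i < k \<and> A (x i) (x (Suc i))}"

definition shift :: "(nat \<Rightarrow> nat) \<Rightarrow> (nat \<Rightarrow> nat)" where
  "shift x = (\<lambda>i. x (Suc i))"

definition top_mixing :: "nat \<Rightarrow> (nat \<Rightarrow> nat \<Rightarrow> bool) \<Rightarrow> bool" where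
  "top_mixing k A \<longleftrightarrow>
     (\<forall>U V. open U \<and> open V \<and> U \<inter> SFT k A \<noteq> {} \<and> V \<inter> SFT k A \<noteq> {} \<longrightarrow>
        (\<exists>N. \<forall>n\<ge>N. \<exists>x \<in> U \<inter> SFT k A. (shift ^^ n) x \<in> V))"

definition cyl :: "nat \<Rightarrow> (nat \<Rightarrow> nat \<Rightarrow> bool) \<Rightarrow> nat list \<Rightarrow> (nat \<Rightarrow> nat) set" where
  "cyl k A w = {x \<in> SFT k A. \<forall>i < length w. x i = w ! i}"

definition prefix_word :: "(nat \<Rightarrow> nat) \<Rightarrow> nat \<Rightarrow> nat list" where
  "prefix_word x n = map x [0..<n]"

definition words :: "nat \<Rightarrow> (nat \<Rightarrow> nat \<Rightarrow> bool) \<Rightarrow> nat \<Rightarrow> nat list set" where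
  "words k A n = {w. length w = n \<and> cyl k A w \<noteq> {}}"

text \<open>Sequences of potentials are maps nat => (nat => nat) => real; only indices n \<ge> 1
  are relevant.\<close>

definition almost_additive ::
  "nat \<Rightarrow> (nat \<Rightarrow> nat \<Rightarrow> bool) \<Rightarrow> (nat \<Rightarrow> (nat \<Rightarrow> nat) \<Rightarrow> real) \<Rightarrow> bool" where
  "almost_additive k A \<phi> \<longleftrightarrow>
     (\<exists>C. \<forall>x \<in> SFT k A. \<forall>n\<ge>1. \<forall>m\<ge>1.
        \<bar>\<phi> (n + m) x - \<phi> n x - \<phi> m ((shift ^^ n) x)\<bar> \<le> C)"

definition bounded_variation ::
  "nat \<Rightarrow> (nat \<Rightarrow> nat \<Rightarrow> bool) \<Rightarrow> (nat \<Rightarrow> (nat \<Rightarrow> nat) \<Rightarrow> real) \<Rightarrow> bool" where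
  "bounded_variation k A \<phi> \<longleftrightarrow>
     (\<exists>C'. \<forall>n\<ge>1. \<forall>x \<in> SFT k A. \<forall>y \<in> SFT k A.
        (\<forall>i<n. x i = y i) \<longrightarrow> \<bar>\<phi> n x - \<phi> n y\<bar> \<le> C')"

definition negative_pot ::
  "nat \<Rightarrow> (nat \<Rightarrow> nat \<Rightarrow> bool) \<Rightarrow> (nat \<Rightarrow> (nat \<Rightarrow> nat) \<Rightarrow> real) \<Rightarrow> bool" where
  "negative_pot k A \<phi> \<longleftrightarrow>
     (\<exists>c>0. \<forall>x \<in> SFT k A. \<forall>n\<ge>1. \<phi> n x \<le> - c * real n \<and> \<phi> (Suc n) x \<le> \<phi> n x)"

definition F_minus ::
  "nat \<Rightarrow> (nat \<Rightarrow> nat \<Rightarrow> bool) \<Rightarrow> (nat \<Rightarrow> (nat \<Rightarrow> nat) \<Rightarrow> real) \<Rightarrow> bool" where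
  "F_minus k A \<phi> \<longleftrightarrow>
     (\<forall>n\<ge>1. continuous_on (SFT k A) (\<phi> n)) \<and>
     almost_additive k A \<phi> \<and> bounded_variation k A \<phi> \<and> negative_pot k A \<phi>"

definition pressure ::
  "nat \<Rightarrow> (nat \<Rightarrow> nat \<Rightarrow> bool) \<Rightarrow> (nat \<Rightarrow> (nat \<Rightarrow> nat) \<Rightarrow> real) \<Rightarrow> real" where
  "pressure k A \<phi> =
     lim (\<lambda>n. ln (\<Sum>w \<in> words k A n. exp (SUP x \<in> cyl k A w. \<phi> n x)) / real n)"

definition dPsi ::
  "nat \<Rightarrow> (nat \<Rightarrow> nat \<Rightarrow> bool) \<Rightarrow> (nat \<Rightarrow> (nat \<Rightarrow> nat) \<Rightarrow> real) \<Rightarrow>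
   (nat \<Rightarrow> nat) \<Rightarrow> (nat \<Rightarrow> nat) \<Rightarrow> real" where
  "dPsi k A \<psi> x y =
     (if x = y then 0
      else (let n = (LEAST i. x i \<noteq> y i)
            in SUP z \<in> cyl k A (prefix_word x n). exp (if n = 0 then 0 else \<psi> n z)))"

definition ballPsi ::
  "nat \<Rightarrow> (nat \<Rightarrow> nat \<Rightarrow> bool) \<Rightarrow> (nat \<Rightarrow> (nat \<Rightarrow> nat) \<Rightarrow> real) \<Rightarrow>
   (nat \<Rightarrow> nat) \<Rightarrow> real \<Rightarrow> (nat \<Rightarrow> nat) set" where
  "ballPsi k A \<psi> x r = {y \<in> SFT k A. dPsi k A \<psi> x y < r}"

definition lower_local_dim ::
  "nat \<Rightarrow> (nat \<Rightarrow> nat \<Rightarrow> bool) \<Rightarrow> (nat \<Rightarrow> (nat \<Rightarrow> nat) \<Rightarrow> real) \<Rightarrow>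
   (nat \<Rightarrow> nat) measure \<Rightarrow> (nat \<Rightarrow> nat) \<Rightarrow> ereal" where
  "lower_local_dim k A \<psi> \<mu> x =
     Liminf (at_right 0) (\<lambda>r. ereal (ln (measure \<mu> (ballPsi k A \<psi> x r)) / ln r))"

definition upper_local_dim ::
  "nat \<Rightarrow> (nat \<Rightarrow> nat \<Rightarrow> bool) \<Rightarrow> (nat \<Rightarrow> (nat \<Rightarrow> nat) \<Rightarrow> real) \<Rightarrow>
   (nat \<Rightarrow> nat) measure \<Rightarrow> (nat \<Rightarrow> nat) \<Rightarrow> ereal" where
  "upper_local_dim k A \<psi> \<mu> x =
     Limsup (at_right 0) (\<lambda>r. ereal (ln (measure \<mu> (ballPsi k A \<psi> x r)) / ln r))"

text \<open>mu is the (invariant) Gibbs measure of the zero potential on Sigma_A, i.e.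
  mu([x|_n]) is comparable to exp(-n P(0)) uniformly; this is the measure of maximal
  entropy mu_max.\<close>
definition gibbs_zero :: "nat \<Rightarrow> (nat \<Rightarrow> nat \<Rightarrow> bool) \<Rightarrow> (nat \<Rightarrow> nat) measure \<Rightarrow> bool" where
  "gibbs_zero k A \<mu> \<longleftrightarrow>
     emeasure \<mu> (space \<mu>) = 1 \<and> sets \<mu> = sets borel \<and> measure \<mu> (SFT k A) = 1 \<and>
     (\<forall>B \<in> sets \<mu>. measure \<mu> (shift -` B \<inter> space \<mu>) = measure \<mu> B) \<and>
     (\<exists>C\<ge>1. \<forall>x \<in> SFT k A. \<forall>n.
        measure \<mu> (cyl k A (prefix_word x n)) \<le> C * exp (- real n * pressure k A (\<lambda>_ _. 0)) \<and>
        exp (- real n * pressure k A (\<lambda>_ _. 0)) \<le> C * measure \<mu> (cyl k A (prefix_word x n)))"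

end

theory Submission
  imports Defs "HOL-Analysis.Analysis"
begin


lemma absA_liminf:
  fixes f :: "real \<Rightarrow> real" and g :: "nat \<Rightarrow> real"
  assumes H1: "\<And>\<epsilon> N. \<epsilon> > 0 \<Longrightarrow> eventually (\<lambda>r. \<exists>n\<ge>N. \<bar>f r - g n\<bar> < \<epsilon>) (at_right 0)"
  and H2: "\<And>\<epsilon> \<delta>. \<epsilon> > 0 \<Longrightarrow> \<delta> > 0 \<Longrightarrow> \<exists>N. \<forall>n\<ge>N. \<exists>r. 0 < r \<and> r < \<delta> \<and> \<bar>f r - g n\<bar> < \<epsilon>"
  shows "Liminf (at_right 0) (\<lambda>r. ereal (f r)) = Liminf sequentially (\<lambda>n. ereal (g n))"
proof (rule antisym)
  show "Liminf sequentially (\<lambda>n. ereal (g n)) \<le> Liminf (at_right 0) (\<lambda>r. ereal (f r))"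
    unfolding le_Liminf_iff[of _ "at_right 0"]
  proof (intro allI impI)
    fix y assume y: "y < Liminf sequentially (\<lambda>n. ereal (g n))"
    obtain z1 where z1: "y < ereal z1" "ereal z1 < Liminf sequentially (\<lambda>n. ereal (g n))"
      using ereal_dense2[OF y] by blast
    obtain z2 where z2: "ereal z1 < ereal z2" "ereal z2 < Liminf sequentially (\<lambda>n. ereal (g n))"
      using ereal_dense2[OF z1(2)] by blast
    have "z1 < z2" using z2 by simp
    have "eventually (\<lambda>n. ereal ((z1+z2)/2) < ereal (g n)) sequentially"
    proof -
      have "ereal ((z1+z2)/2) < ereal z2" using \<open>z1 < z2\<close> by simp
      moreover have "ereal z2 \<le> Liminf sequentially (\<lambda>n. ereal (g n))" using z2(2) by simp
      ultimately show ?thesis unfolding le_Liminf_iff by blast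
    qed
    then obtain N where N: "\<And>n. n \<ge> N \<Longrightarrow> (z1+z2)/2 < g n"
      unfolding eventually_sequentially by auto
    have "eventually (\<lambda>r. \<exists>n\<ge>N. \<bar>f r - g n\<bar> < (z2 - z1)/2) (at_right 0)"
      using \<open>z1 < z2\<close> by (intro H1) simp
    then show "eventually (\<lambda>r. y < ereal (f r)) (at_right 0)"
    proof (rule eventually_mono)
      fix r assume "\<exists>n\<ge>N. \<bar>f r - g n\<bar> < (z2 - z1)/2"
      then obtain n where "n \<ge> N" "\<bar>f r - g n\<bar> < (z2 - z1)/2" by blast
      moreover have "(z1+z2)/2 < g n" using N \<open>n \<ge> N\<close> by blast
      ultimately have "z1 < f r" using abs_ge_minus_self[of "f r - g n"] by argo
      then show "y < ereal (f r)" using z1(1) less_trans by fastforce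
    qed
  qed
next
  show "Liminf (at_right 0) (\<lambda>r. ereal (f r)) \<le> Liminf sequentially (\<lambda>n. ereal (g n))"
  proof (rule ccontr)
    assume "\<not> ?thesis"
    hence lt: "Liminf sequentially (\<lambda>n. ereal (g n)) < Liminf (at_right 0) (\<lambda>r. ereal (f r))" by simp
    obtain z0 where z0: "Liminf sequentially (\<lambda>n. ereal (g n)) < ereal z0" "ereal z0 < Liminf (at_right 0) (\<lambda>r. ereal (f r))"
      using ereal_dense2[OF lt] by blast
    obtain z1 where z1: "ereal z0 < ereal z1" "ereal z1 < Liminf (at_right 0) (\<lambda>r. ereal (f r))"
      using ereal_dense2[OF z0(2)] by blast
    have "z0 < z1" using z1 by simp
    define w where "w = (z0 + z1)/2"
    have "z0 < w" "w < z1" using \<open>z0 < z1\<close> unfolding w_def by auto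
    have "eventually (\<lambda>r. ereal w < ereal (f r)) (at_right 0)"
    proof -
      have "ereal w < ereal z1" using \<open>w < z1\<close> by simp
      moreover have "ereal z1 \<le> Liminf (at_right 0) (\<lambda>r. ereal (f r))" using z1(2) by simp
      ultimately show ?thesis unfolding le_Liminf_iff by blast
    qed
    then obtain \<delta> where \<delta>: "\<delta> > 0" "\<And>r. r > 0 \<Longrightarrow> r < \<delta> \<Longrightarrow> w < f r"
      unfolding eventually_at_right_field by auto
    have "\<not> eventually (\<lambda>n. ereal ((z0 + w)/2) < ereal (g n)) sequentially"
    proof
      assume "eventually (\<lambda>n. ereal ((z0 + w)/2) < ereal (g n)) sequentially"
      hence "ereal ((z0 + w)/2) \<le> Liminf sequentially (\<lambda>n. ereal (g n))"
        by (intro Liminf_bounded) (auto elim: eventually_mono)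
      moreover have "ereal z0 < ereal ((z0 + w)/2)" using \<open>z0 < w\<close> by simp
      ultimately show False using z0(1) by order
    qed
    hence fr: "\<And>N. \<exists>n\<ge>N. g n \<le> (z0 + w)/2"
      unfolding eventually_sequentially by (auto simp: not_less)
    obtain N where N: "\<And>n. n \<ge> N \<Longrightarrow> \<exists>r. 0 < r \<and> r < \<delta> \<and> \<bar>f r - g n\<bar> < (w - z0)/2"
      using H2[of "(w - z0)/2" \<delta>] \<open>z0 < w\<close> \<delta>(1) by auto
    obtain n where n: "n \<ge> N" "g n \<le> (z0 + w)/2" using fr by blast
    obtain r where r: "0 < r" "r < \<delta>" "\<bar>f r - g n\<bar> < (w - z0)/2" using N[OF n(1)] by blast
    have "f r < w" using r(3) n(2) abs_ge_self[of "f r - g n"] by argo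
    with \<delta>(2)[OF r(1,2)] show False by simp
  qed
qed

lemma absA_limsup:
  fixes f :: "real \<Rightarrow> real" and g :: "nat \<Rightarrow> real"
  assumes H1: "\<And>\<epsilon> N. \<epsilon> > 0 \<Longrightarrow> eventually (\<lambda>r. \<exists>n\<ge>N. \<bar>f r - g n\<bar> < \<epsilon>) (at_right 0)"
  and H2: "\<And>\<epsilon> \<delta>. \<epsilon> > 0 \<Longrightarrow> \<delta> > 0 \<Longrightarrow> \<exists>N. \<forall>n\<ge>N. \<exists>r. 0 < r \<and> r < \<delta> \<and> \<bar>f r - g n\<bar> < \<epsilon>"
  shows "Limsup (at_right 0) (\<lambda>r. ereal (f r)) = Limsup sequentially (\<lambda>n. ereal (g n))"
proof -
  have eq: "\<bar>(- f r) - (- g n)\<bar> = \<bar>f r - g n\<bar>" for r n by linarith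
  have "Liminf (at_right 0) (\<lambda>r. ereal (- f r)) = Liminf sequentially (\<lambda>n. ereal (- g n))"
    by (rule absA_liminf) (use H1 H2 in \<open>simp_all only: eq\<close>)
  hence "Liminf (at_right 0) (\<lambda>r. - ereal (f r)) = Liminf sequentially (\<lambda>n. - ereal (g n))"
    by simp
  hence "- Limsup (at_right 0) (\<lambda>r. ereal (f r)) = - Limsup sequentially (\<lambda>n. ereal (g n))"
    unfolding ereal_Liminf_uminus .
  thus ?thesis by simp
qed

lemma absB_liminf:
  fixes \<phi> :: "real \<Rightarrow> real" and a :: "nat \<Rightarrow> real"
  assumes mono: "mono \<phi>" and cont: "\<And>t. isCont \<phi> t"
    and L: "Liminf sequentially (\<lambda>n. ereal (a n)) = ereal l"
  shows "Liminf sequentially (\<lambda>n. ereal (\<phi> (a n))) = ereal (\<phi> l)"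
proof (rule antisym)
  show "ereal (\<phi> l) \<le> Liminf sequentially (\<lambda>n. ereal (\<phi> (a n)))"
    unfolding le_Liminf_iff
  proof (intro allI impI)
    fix y assume y: "y < ereal (\<phi> l)"
    obtain z where z: "y < ereal z" "ereal z < ereal (\<phi> l)" using ereal_dense2[OF y] by blast
    have "z < \<phi> l" using z by simp
    obtain \<eta> where \<eta>: "\<eta> > 0" "\<And>t. t \<noteq> l \<Longrightarrow> \<bar>t - l\<bar> < \<eta> \<Longrightarrow> \<bar>\<phi> t - \<phi> l\<bar> < \<phi> l - z"
    proof -
      have "\<forall>r>0. \<exists>s>0. \<forall>x. x \<noteq> l \<and> \<bar>x - l\<bar> < s \<longrightarrow> \<bar>\<phi> x - \<phi> l\<bar> < r"
        using cont[of l] unfolding isCont_def LIM_eq by simp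
      from this[rule_format, of "\<phi> l - z"] \<open>z < \<phi> l\<close> obtain s where
        "s > 0" "\<And>x. x \<noteq> l \<Longrightarrow> \<bar>x - l\<bar> < s \<Longrightarrow> \<bar>\<phi> x - \<phi> l\<bar> < \<phi> l - z" by auto
      thus ?thesis using that by blast
    qed
    have "\<phi> l - z > \<bar>\<phi> (l - \<eta>/2) - \<phi> l\<bar>" using \<eta> by simp
    hence z2: "z < \<phi> (l - \<eta>/2)" by linarith
    have "eventually (\<lambda>n. ereal (l - \<eta>/2) < ereal (a n)) sequentially"
    proof -
      have "ereal (l - \<eta>/2) < ereal l" using \<eta> by simp
      moreover have "\<forall>y<ereal l. eventually (\<lambda>n. y < ereal (a n)) sequentially"
        using L le_Liminf_iff[of "ereal l" sequentially "\<lambda>n. ereal (a n)"] by simp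
      ultimately show ?thesis by blast
    qed
    thus "eventually (\<lambda>n. y < ereal (\<phi> (a n))) sequentially"
    proof (rule eventually_mono)
      fix n assume "ereal (l - \<eta>/2) < ereal (a n)"
      hence "\<phi> (l - \<eta>/2) \<le> \<phi> (a n)" using mono by (simp add: monoD)
      hence "z < \<phi> (a n)" using z2 by linarith
      hence "ereal z < ereal (\<phi> (a n))" by simp
      thus "y < ereal (\<phi> (a n))" using z(1) by order
    qed
  qed
next
  show "Liminf sequentially (\<lambda>n. ereal (\<phi> (a n))) \<le> ereal (\<phi> l)"
  proof (rule ccontr)
    assume "\<not> ?thesis"
    hence lt: "ereal (\<phi> l) < Liminf sequentially (\<lambda>n. ereal (\<phi> (a n)))" by simp
    obtain z0 where z0: "ereal (\<phi> l) < ereal z0" "ereal z0 < Liminf sequentially (\<lambda>n. ereal (\<phi> (a n)))"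
      using ereal_dense2[OF lt] by blast
    have "\<phi> l < z0" using z0 by simp
    obtain \<eta> where \<eta>: "\<eta> > 0" "\<And>t. t \<noteq> l \<Longrightarrow> \<bar>t - l\<bar> < \<eta> \<Longrightarrow> \<bar>\<phi> t - \<phi> l\<bar> < z0 - \<phi> l"
    proof -
      have "\<forall>r>0. \<exists>s>0. \<forall>x. x \<noteq> l \<and> \<bar>x - l\<bar> < s \<longrightarrow> \<bar>\<phi> x - \<phi> l\<bar> < r"
        using cont[of l] unfolding isCont_def LIM_eq by simp
      from this[rule_format, of "z0 - \<phi> l"] \<open>\<phi> l < z0\<close> obtain s where
        "s > 0" "\<And>x. x \<noteq> l \<Longrightarrow> \<bar>x - l\<bar> < s \<Longrightarrow> \<bar>\<phi> x - \<phi> l\<bar> < z0 - \<phi> l" by auto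
      thus ?thesis using that by blast
    qed
    have "z0 - \<phi> l > \<bar>\<phi> (l + \<eta>/2) - \<phi> l\<bar>" using \<eta> by simp
    hence z2: "\<phi> (l + \<eta>/2) < z0" by linarith
    have ev: "eventually (\<lambda>n. ereal z0 < ereal (\<phi> (a n))) sequentially"
    proof -
      have "\<forall>y<Liminf sequentially (\<lambda>n. ereal (\<phi> (a n))). eventually (\<lambda>n. y < ereal (\<phi> (a n))) sequentially"
        using le_Liminf_iff[of "Liminf sequentially (\<lambda>n. ereal (\<phi> (a n)))" sequentially "\<lambda>n. ereal (\<phi> (a n))"]
        by simp
      with z0(2) show ?thesis by blast
    qed
    have "\<not> eventually (\<lambda>n. ereal (l + \<eta>/2) \<le> ereal (a n)) sequentially"
    proof
      assume "eventually (\<lambda>n. ereal (l + \<eta>/2) \<le> ereal (a n)) sequentially"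
      hence "ereal (l + \<eta>/2) \<le> Liminf sequentially (\<lambda>n. ereal (a n))" by (rule Liminf_bounded)
      moreover have "ereal l < ereal (l + \<eta>/2)" using \<eta>(1) by simp
      ultimately show False using L by simp
    qed
    hence fr: "\<And>N. \<exists>n\<ge>N. a n < l + \<eta>/2"
      unfolding eventually_sequentially by (auto simp: not_le)
    obtain N where N: "\<And>n. n \<ge> N \<Longrightarrow> ereal z0 < ereal (\<phi> (a n))"
      using ev unfolding eventually_sequentially by blast
    obtain n where n: "n \<ge> N" "a n < l + \<eta>/2" using fr by blast
    have "\<phi> (a n) \<le> \<phi> (l + \<eta>/2)" using mono n(2) by (simp add: monoD)
    hence "\<phi> (a n) < z0" using z2 by linarith
    with N[OF n(1)] show False by simp
  qed
qed

lemma absB_limsup: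
  fixes \<phi> :: "real \<Rightarrow> real" and a :: "nat \<Rightarrow> real"
  assumes mono: "mono \<phi>" and cont: "\<And>t. isCont \<phi> t"
    and L: "Limsup sequentially (\<lambda>n. ereal (a n)) = ereal l"
  shows "Limsup sequentially (\<lambda>n. ereal (\<phi> (a n))) = ereal (\<phi> l)"
proof -
  define \<psi> where "\<psi> = (\<lambda>t. - \<phi> (- t))"
  have m: "mono \<psi>" unfolding \<psi>_def mono_def using mono by (simp add: monoD)
  have c: "isCont \<psi> t" for t unfolding \<psi>_def
  proof -
    have "isCont (\<lambda>t. - t) t" by simp
    hence "isCont (\<lambda>t. \<phi> (- t)) t" using isCont_o2[OF _ cont] by blast
    thus "isCont (\<lambda>t. - \<phi> (- t)) t" by (rule isCont_minus)
  qed
  have "Liminf sequentially (\<lambda>n. ereal (- a n)) = ereal (- l)"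
    using ereal_Liminf_uminus[of sequentially "\<lambda>n. ereal (a n)"] L by simp
  from absB_liminf[OF m c this]
  have "Liminf sequentially (\<lambda>n. - ereal (\<phi> (a n))) = - ereal (\<phi> l)" by (simp add: \<psi>_def)
  hence "- Limsup sequentially (\<lambda>n. ereal (\<phi> (a n))) = - ereal (\<phi> l)"
    unfolding ereal_Liminf_uminus .
  thus ?thesis by (metis ereal_uminus_uminus)
qed


lemma est2:
  fixes L t p m n h E G K c :: real
  assumes t: "t > 0" and c: "c > 0" and n: "n > 0" and p: "p \<ge> c * n" and tp: "p - K \<le> t" "t \<le> p"
    and E: "\<bar>L + m * h\<bar> \<le> E" and mn: "0 \<le> m - n" "m - n \<le> G" and h: "h \<ge> 0" and K: "K \<ge> 0"
  shows "\<bar>(- L) / t - h * n / p\<bar> \<le> (E + h * G + h * K / c) / t"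
proof -
  have p0: "p > 0" using t tp by linarith
  have eq: "(- L) / t - h * n / p = (- (L + m * h)) / t + h * (((m - n) * p + n * (p - t)) / (t * p))"
    using t p0 by (simp add: field_simps)
  have a1: "\<bar>(- (L + m * h)) / t\<bar> \<le> E / t"
    using E t by (simp add: abs_minus_commute divide_right_mono)
  have b0: "0 \<le> ((m - n) * p + n * (p - t)) / (t * p)"
    using mn tp n t p0 by (intro divide_nonneg_pos) (auto intro!: add_nonneg_nonneg mult_nonneg_nonneg)
  have b1: "(m - n) * p \<le> G * p" using mn p0 by (simp add: mult_right_mono)
  have b2: "n * (p - t) \<le> n * K" using tp n by (simp add: mult_left_mono)
  have b3: "n * K \<le> p * K / c" using p c K by (simp add: field_simps mult_left_mono)
  have "((m - n) * p + n * (p - t)) / (t * p) \<le> (G * p + p * K / c) / (t * p)"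
  proof (rule divide_right_mono)
    show "(m - n) * p + n * (p - t) \<le> G * p + p * K / c" using b1 b2 b3 by linarith
    show "0 \<le> t * p" using t p0 by simp
  qed
  also have "\<dots> = (G + K / c) / t" using p0 t by (simp add: field_simps)
  finally have b4: "((m - n) * p + n * (p - t)) / (t * p) \<le> (G + K / c) / t" .
  have "\<bar>h * (((m - n) * p + n * (p - t)) / (t * p))\<bar> \<le> h * ((G + K / c) / t)"
  proof -
    have "\<bar>h * (((m - n) * p + n * (p - t)) / (t * p))\<bar> = h * (((m - n) * p + n * (p - t)) / (t * p))"
      using b0 h by (intro abs_of_nonneg mult_nonneg_nonneg)
    thus ?thesis using b4 h mult_left_mono by metis
  qed
  hence "\<bar>(- L) / t - h * n / p\<bar> \<le> E / t + h * ((G + K / c) / t)"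
    unfolding eq using a1 abs_triangle_ineq[of "(- (L + m * h)) / t"] by linarith
  also have "\<dots> = (E + h * G + h * K / c) / t" by (simp add: add_divide_distrib ring_distribs)
  finally show ?thesis .
qed


lemma shift_iter_apply: "(shift ^^ n) x i = x (n + i)"
  by (induction n arbitrary: i) (auto simp: shift_def)

lemma shift_iter_SFT: "x \<in> SFT k A \<Longrightarrow> (shift ^^ n) x \<in> SFT k A"
  by (auto simp: SFT_def shift_iter_apply)

lemma mem_cyl_prefix: "y \<in> cyl k A (prefix_word x n) \<longleftrightarrow> y \<in> SFT k A \<and> (\<forall>i<n. y i = x i)"
  by (auto simp: cyl_def prefix_word_def)

lemma measure_le_one: "emeasure \<mu> (space \<mu>) = 1 \<Longrightarrow> measure \<mu> X \<le> 1"
  unfolding measure_def by (rule enn2real_leI) (use emeasure_space[of \<mu> X] in auto)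

theorem lemma2p5:
  fixes k :: nat and A :: "nat \<Rightarrow> nat \<Rightarrow> bool"
    and \<psi> :: "nat \<Rightarrow> (nat \<Rightarrow> nat) \<Rightarrow> real" and \<mu> :: "(nat \<Rightarrow> nat) measure"
  assumes "top_mixing k A"
    and "F_minus k A \<psi>"
    and "gibbs_zero k A \<mu>"
    and "x \<in> SFT k A"
  defines "Q \<equiv> (\<lambda>s::real. pressure k A (\<lambda>n z. s * \<psi> n z))"
  shows "(lower_local_dim k A \<psi> \<mu> x =
           - ereal (Q 0) / Liminf sequentially (\<lambda>n. ereal (\<psi> n x / real n))) \<and>
         (upper_local_dim k A \<psi> \<mu> x =
           - ereal (Q 0) / Limsup sequentially (\<lambda>n. ereal (\<psi> n x / real n)))"
proof -
  define S where "S = SFT k A"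
  have xS: "x \<in> S" using assms(4) S_def by simp
  define h where "h = pressure k A (\<lambda>_ _. 0)"
  have Q0: "Q 0 = h" unfolding Q_def h_def by simp
  obtain C where AA: "\<And>z n m. z \<in> S \<Longrightarrow> n \<ge> 1 \<Longrightarrow> m \<ge> 1 \<Longrightarrow>
      \<bar>\<psi> (n + m) z - \<psi> n z - \<psi> m ((shift ^^ n) z)\<bar> \<le> C"
    using assms(2) unfolding F_minus_def almost_additive_def S_def by blast
  obtain C' where BV: "\<And>n z y. n \<ge> 1 \<Longrightarrow> z \<in> S \<Longrightarrow> y \<in> S \<Longrightarrow> (\<forall>i<n. z i = y i) \<Longrightarrow>
      \<bar>\<psi> n z - \<psi> n y\<bar> \<le> C'"
    using assms(2) unfolding F_minus_def bounded_variation_def S_def by blast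
  obtain c where c0: "c > 0" and NEG: "\<And>z n. z \<in> S \<Longrightarrow> n \<ge> 1 \<Longrightarrow> \<psi> n z \<le> - c * real n"
      and DEC: "\<And>z n. z \<in> S \<Longrightarrow> n \<ge> 1 \<Longrightarrow> \<psi> (Suc n) z \<le> \<psi> n z"
    using assms(2) unfolding F_minus_def negative_pot_def S_def by blast
  obtain C0 where C01: "C0 \<ge> 1" and GIB: "\<And>z n. z \<in> S \<Longrightarrow>
        measure \<mu> (cyl k A (prefix_word z n)) \<le> C0 * exp (- real n * h) \<and>
        exp (- real n * h) \<le> C0 * measure \<mu> (cyl k A (prefix_word z n))"
    using assms(3) unfolding gibbs_zero_def S_def h_def by blast
  have prob: "emeasure \<mu> (space \<mu>) = 1" using assms(3) unfolding gibbs_zero_def by blast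
  have C0: "C \<ge> 0" using AA[OF xS, of 1 1] by linarith
  have C'0: "C' \<ge> 0" using BV[OF _ xS xS, of 1] by linarith
  have shS: "(shift ^^ n) z \<in> S" if "z \<in> S" for n z using that shift_iter_SFT S_def by blast
  obtain B1 where B1: "\<And>z. z \<in> S \<Longrightarrow> \<bar>\<psi> 1 z\<bar> \<le> B1"
  proof -
    define rep where "rep s = (SOME z. z \<in> S \<and> z 0 = s)" for s
    have "\<bar>\<psi> 1 z\<bar> \<le> (\<Sum>s<k. \<bar>\<psi> 1 (rep s)\<bar>) + C'" if z: "z \<in> S" for z
    proof -
      have zk: "z 0 < k" using z unfolding S_def SFT_def by blast
      have "\<exists>y. y \<in> S \<and> y 0 = z 0" using z by blast
      hence r: "rep (z 0) \<in> S \<and> rep (z 0) 0 = z 0" unfolding rep_def by (rule someI_ex)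
      have "\<forall>i<1. z i = rep (z 0) i" using r by simp
      hence "\<bar>\<psi> 1 z - \<psi> 1 (rep (z 0))\<bar> \<le> C'" using BV[of 1 z "rep (z 0)"] r z by blast
      moreover have "\<bar>\<psi> 1 (rep (z 0))\<bar> \<le> (\<Sum>s<k. \<bar>\<psi> 1 (rep s)\<bar>)"
        by (rule member_le_sum) (use zk in simp_all)
      ultimately show ?thesis by linarith
    qed
    thus ?thesis using that by blast
  qed
  have measP1: "measure \<mu> X \<le> 1" for X using measure_le_one[OF prob] .
  have h0: "h \<ge> 0"
  proof (rule ccontr)
    assume "\<not> h \<ge> 0"
    hence hn: "h < 0" by simp
    obtain n :: nat where n: "real n > C0 / (- h)" using reals_Archimedean2 by blast
    have "real n * (- h) > C0" using n hn by (simp add: field_simps)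
    hence "exp (- real n * h) > C0" using exp_ge_add_one_self[of "- real n * h"] by linarith
    moreover have "exp (- real n * h) \<le> C0"
    proof -
      have "C0 * measure \<mu> (cyl k A (prefix_word x n)) \<le> C0 * 1"
        by (rule mult_left_mono) (use C01 measP1 in auto)
      thus ?thesis using GIB[OF xS, of n] by linarith
    qed
    ultimately show False by simp
  qed
  have psi_mono: "\<psi> m z \<le> \<psi> n z" if "z \<in> S" "1 \<le> n" "n \<le> m" for z n m
    using that(3)
  proof (induction m rule: dec_induct)
    case base then show ?case by simp
  next
    case (step j) then show ?case using DEC[OF that(1), of j] that(2) by linarith
  qed
  have psi_low: "\<psi> n x \<ge> - (B1 + C) * real n" if "n \<ge> 1" for n
    using that
  proof (induction n rule: dec_induct)
    case base then show ?case using B1[OF xS] \<open>C \<ge> 0\<close> by (simp add: abs_le_iff)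
  next
    case (step j)
    have "\<bar>\<psi> (j + 1) x - \<psi> j x - \<psi> 1 ((shift ^^ j) x)\<bar> \<le> C" using AA[OF xS, of j 1] step by simp
    moreover have "\<bar>\<psi> 1 ((shift ^^ j) x)\<bar> \<le> B1" using B1[OF shS[OF xS]] .
    ultimately show ?case using step by (simp add: abs_le_iff algebra_simps)
  qed
  define P where "P n = cyl k A (prefix_word x n)" for n
  define D where "D n = (SUP z\<in>P n. exp (if n = 0 then 0 else \<psi> n z))" for n
  have memP: "y \<in> P n \<longleftrightarrow> y \<in> S \<and> (\<forall>i<n. y i = x i)" for y n
    unfolding P_def S_def by (rule mem_cyl_prefix)
  have xP: "x \<in> P n" for n using memP xS by simp
  hence Pne: "P n \<noteq> {}" for n by blast
  have D0: "D 0 = 1" unfolding D_def using Pne by simp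
  have Dn: "D n = (SUP z\<in>P n. exp (\<psi> n z))" if "n \<ge> 1" for n
    unfolding D_def using that by simp
  have psiP: "\<psi> n z \<le> \<psi> n x + C'" if "n \<ge> 1" "z \<in> P n" for n z
    using BV[OF that(1), of z x] that memP xS by (simp add: abs_le_iff)
  have bdd: "bdd_above ((\<lambda>z. exp (\<psi> n z)) ` P n)" if "n \<ge> 1" for n
    by (rule bdd_aboveI2[of _ _ "exp (\<psi> n x + C')"]) (use psiP[OF that] in auto)
  have Dlow: "exp (\<psi> n x) \<le> D n" if "n \<ge> 1" for n
    unfolding Dn[OF that] by (rule cSUP_upper[OF xP bdd[OF that]])
  have Dup: "D n \<le> exp (\<psi> n x + C')" if "n \<ge> 1" for n
    unfolding Dn[OF that] by (rule cSUP_least[OF Pne]) (use psiP[OF that] in auto)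
  have Dpos: "D n > 0" for n
  proof (cases "n = 0")
    case True then show ?thesis using D0 by simp
  next
    case False then show ?thesis using Dlow[of n] by (smt (verit) exp_gt_zero less_one not_le)
  qed
  have Dsuc: "D (Suc n) \<le> D n" for n
  proof (cases "n = 0")
    case True
    have "D (Suc 0) \<le> 1" unfolding Dn[of "Suc 0", simplified]
    proof (rule cSUP_least[OF Pne])
      fix z assume "z \<in> P (Suc 0)"
      hence "z \<in> S" using memP by blast
      hence "\<psi> 1 z \<le> 0" using NEG[of z 1] c0 by simp
      thus "exp (\<psi> (Suc 0) z) \<le> 1" by simp
    qed
    then show ?thesis using True D0 by simp
  next
    case False
    hence n1: "n \<ge> 1" by simp
    show ?thesis unfolding Dn[of "Suc n", simplified] 
    proof (rule cSUP_least[OF Pne])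
      fix z assume z: "z \<in> P (Suc n)"
      hence zS: "z \<in> S" and zP: "z \<in> P n" using memP by auto
      have "exp (\<psi> (Suc n) z) \<le> exp (\<psi> n z)" using DEC[OF zS n1] by simp
      also have "\<dots> \<le> D n" unfolding Dn[OF n1] by (rule cSUP_upper[OF zP bdd[OF n1]])
      finally show "exp (\<psi> (Suc n) z) \<le> D n" .
    qed
  qed
  have Danti: "D n \<le> D m" if "m \<le> n" for m n
    using lift_Suc_antimono_le[of D, OF Dsuc that] .
  have dPsi_eq: "dPsi k A \<psi> x y = D (LEAST i. x i \<noteq> y i)" if "y \<noteq> x" for y
    unfolding dPsi_def D_def P_def Let_def using that by simp
  have Dsmall: "D n \<le> exp (C' - c * real n)" if "n \<ge> 1" for n
  proof -
    have "exp (\<psi> n x + C') \<le> exp (C' - c * real n)" using NEG[OF xS that] by simp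
    thus ?thesis using Dup[OF that] by linarith
  qed
  have Dex: "\<exists>n. D n < r" if "r > 0" for r
  proof -
    obtain n :: nat where n: "real n > (C' - ln r) / c" using reals_Archimedean2 by blast
    define n' where "n' = Suc n"
    have "real n' > (C' - ln r) / c" "n' \<ge> 1" using n unfolding n'_def by auto
    hence "c * real n' > C' - ln r" using c0 by (simp add: field_simps)
    hence "exp (C' - c * real n') < exp (ln r)" by simp
    hence "exp (C' - c * real n') < r" using that by simp
    thus ?thesis using Dsmall[OF \<open>n' \<ge> 1\<close>] by (intro exI[of _ n']) simp
  qed
  define mr where "mr r = (LEAST n. D n < r)" for r
  have mr1: "D (mr r) < r" if "r > 0" for r
    unfolding mr_def using Dex[OF that] by (rule LeastI_ex)
  have mr2: "D n \<ge> r" if "n < mr r" for r n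
    using that not_less_Least unfolding mr_def by (metis not_le)
  have mr_ge1: "mr r \<ge> 1" if "0 < r" "r \<le> 1" for r
  proof (rule ccontr)
    assume "\<not> mr r \<ge> 1"
    hence "mr r = 0" by simp
    thus False using mr1[OF that(1)] D0 that(2) by simp
  qed
  have ball_eq: "ballPsi k A \<psi> x r = P (mr r)" if r0: "r > 0" for r
  proof (intro set_eqI iffI)
    fix y assume "y \<in> ballPsi k A \<psi> x r"
    hence yS: "y \<in> S" and yd: "dPsi k A \<psi> x y < r" unfolding ballPsi_def S_def by auto
    show "y \<in> P (mr r)"
    proof (cases "y = x")
      case True then show ?thesis using xP by simp
    next
      case False
      define j where "j = (LEAST i. x i \<noteq> y i)"
      have "D j < r" using yd dPsi_eq[OF False] j_def by simp
      hence "mr r \<le> j" unfolding mr_def by (rule Least_le)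
      hence "\<forall>i<mr r. y i = x i" using not_less_Least[of _ "\<lambda>i. x i \<noteq> y i"] unfolding j_def
        by (metis order_less_le_trans)
      then show ?thesis using memP yS by blast
    qed
  next
    fix y assume yP: "y \<in> P (mr r)"
    hence yS: "y \<in> S" and agree: "\<forall>i<mr r. y i = x i" using memP by auto
    have "dPsi k A \<psi> x y < r"
    proof (cases "y = x")
      case True then show ?thesis unfolding dPsi_def using r0 by simp
    next
      case False
      then obtain i0 where "x i0 \<noteq> y i0" by (metis ext)
      define j where "j = (LEAST i. x i \<noteq> y i)"
      have "x j \<noteq> y j" unfolding j_def by (rule LeastI) (fact)
      hence "mr r \<le> j" using agree by (metis not_le)
      hence "D j \<le> D (mr r)" by (rule Danti)
      thus ?thesis using mr1[OF r0] dPsi_eq[OF False] j_def by simp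
    qed
    thus "y \<in> ballPsi k A \<psi> x r" unfolding ballPsi_def using yS S_def by simp
  qed
  define K where "K = C' + B1 + C"
  have B1pos: "B1 \<ge> 0" using B1[OF xS] by linarith
  have K0: "K \<ge> 0" unfolding K_def using B1pos \<open>C \<ge> 0\<close> C'0 by linarith
  have lnmu: "\<bar>ln (measure \<mu> (ballPsi k A \<psi> x r)) + real (mr r) * h\<bar> \<le> ln C0" if r0: "r > 0" for r
  proof -
    define m where "m = mr r"
    define M where "M = measure \<mu> (ballPsi k A \<psi> x r)"
    have M: "M = measure \<mu> (cyl k A (prefix_word x m))" unfolding M_def m_def ball_eq[OF r0] P_def ..
    have g1: "M \<le> C0 * exp (- real m * h)" and g2: "exp (- real m * h) \<le> C0 * M"
      using GIB[OF xS, of m] M by auto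
    have CM: "0 < C0 * M" using g2 exp_gt_zero[of "- real m * h"] by linarith
    hence Mpos: "M > 0" using C01 by (simp add: zero_less_mult_iff)
    have "ln M \<le> ln (C0 * exp (- real m * h))" using g1 Mpos by simp
    also have "\<dots> = ln C0 - real m * h" using C01 by (simp add: ln_mult)
    finally have u: "ln M \<le> ln C0 - real m * h" .
    have "- real m * h = ln (exp (- real m * h))" by simp
    also have "\<dots> \<le> ln (C0 * M)" using ln_le_cancel_iff[of "exp (- real m * h)" "C0 * M"] g2 CM by simp
    also have "\<dots> = ln C0 + ln M" using C01 Mpos by (simp add: ln_mult)
    finally have l: "- real m * h \<le> ln C0 + ln M" .
    show ?thesis using u l unfolding M_def m_def by (simp add: abs_le_iff)
  qed
  have key1: "\<psi> (mr r) x < ln r \<and> ln r \<le> \<psi> (mr r) x + K" if r0: "0 < r" and r1: "r \<le> 1" for r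
  proof -
    define m where "m = mr r"
    have m1: "m \<ge> 1" using mr_ge1[OF r0 r1] m_def by simp
    have "\<psi> m x = ln (exp (\<psi> m x))" by simp
    also have "\<dots> \<le> ln (D m)" using Dlow[OF m1] Dpos[of m] ln_le_cancel_iff[of "exp (\<psi> m x)" "D m"] by simp
    also have "\<dots> < ln r" using mr1[OF r0] Dpos[of m] r0 m_def by simp
    finally have A1: "\<psi> m x < ln r" .
    have "r \<le> D (m - 1)" using mr2[of "m - 1" r] m1 m_def by simp
    hence "ln r \<le> ln (D (m - 1))" using r0 Dpos[of "m - 1"] by simp
    also have "\<dots> \<le> \<psi> m x + K"
    proof (cases "m = 1")
      case True
      then show ?thesis using D0 B1[OF xS] K_def \<open>C \<ge> 0\<close> C'0 by (simp add: abs_le_iff)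
    next
      case False
      hence m2: "m - 1 \<ge> 1" using m1 by simp
      have "ln (D (m - 1)) \<le> ln (exp (\<psi> (m - 1) x + C'))" using Dup[OF m2] Dpos[of "m - 1"] ln_le_cancel_iff[of "D (m - 1)" "exp (\<psi> (m - 1) x + C')"] by simp
      hence u: "ln (D (m - 1)) \<le> \<psi> (m - 1) x + C'" by simp
      have "\<bar>\<psi> (m - 1 + 1) x - \<psi> (m - 1) x - \<psi> 1 ((shift ^^ (m - 1)) x)\<bar> \<le> C"
        using AA[OF xS m2, of 1] by simp
      moreover have "m - 1 + 1 = m" using m1 by simp
      moreover have "\<bar>\<psi> 1 ((shift ^^ (m - 1)) x)\<bar> \<le> B1" using B1[OF shS[OF xS]] .
      ultimately have "\<psi> m x \<ge> \<psi> (m - 1) x - B1 - C" by (simp add: abs_le_iff)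
      thus ?thesis using u K_def by linarith
    qed
    finally show ?thesis using A1 m_def by simp
  qed
  define f where "f r = ln (measure \<mu> (ballPsi k A \<psi> x r)) / ln r" for r
  define a where "a n = \<psi> n x / real n" for n
  define \<phi> where "\<phi> t = - h / min t (- c)" for t
  define g where "g n = \<phi> (a n)" for n
  have a_up: "a n \<le> - c" if "n \<ge> 1" for n
    using NEG[OF xS that] that unfolding a_def by (simp add: field_simps)
  have a_low: "a n \<ge> - (B1 + C)" if "n \<ge> 1" for n
    using psi_low[OF that] that unfolding a_def by (simp add: field_simps)
  have g_eq: "g n = h * real n / (- \<psi> n x)" if "n \<ge> 1" for n
  proof -
    have "min (a n) (- c) = a n" using a_up[OF that] by simp
    hence "g n = - h / a n" unfolding g_def \<phi>_def by simp
    also have "\<dots> = h * real n / (- \<psi> n x)" unfolding a_def using that by (simp add: divide_simps)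
    finally show ?thesis .
  qed
  have H1: "eventually (\<lambda>r. \<exists>n\<ge>N. \<bar>f r - g n\<bar> < \<epsilon>) (at_right 0)" if eps: "\<epsilon> > 0" for \<epsilon> N
  proof -
    define M1 where "M1 = ln C0 + h * K / c"
    have M10: "M1 \<ge> 0" unfolding M1_def using C01 h0 K0 c0 by simp
    define b where "b = min 1 (min (D N) (exp (- (M1 / \<epsilon>))))"
    have b0: "b > 0" unfolding b_def using Dpos[of N] by simp
    show ?thesis unfolding eventually_at_right_field
    proof (intro exI[of _ b] conjI allI impI)
      show "b > 0" by (fact b0)
    next
      fix r :: real assume r0: "r > 0" and rb: "r < b"
      have r1: "r < 1" and rD: "r < D N" and re: "r < exp (- (M1 / \<epsilon>))" using rb unfolding b_def by auto
      define n where "n = mr r"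
      have Nn: "N < n"
      proof (rule ccontr)
        assume "\<not> N < n"
        hence "D N \<le> D n" using Danti by simp
        thus False using mr1[OF r0] rD n_def by simp
      qed
      have n1: "n \<ge> 1" using Nn by simp
      have k1: "\<psi> n x < ln r" "ln r \<le> \<psi> n x + K" using key1[OF r0] r1 n_def by auto
      have t0: "- ln r > 0" using r0 r1 by simp
      have est: "\<bar>(- ln (measure \<mu> (ballPsi k A \<psi> x r))) / (- ln r) - h * real n / (- \<psi> n x)\<bar>
           \<le> (ln C0 + h * 0 + h * K / c) / (- ln r)"
        by (rule est2[where m = "real n"]) (use t0 c0 n1 NEG[OF xS n1] k1 lnmu[OF r0] h0 K0 n_def in auto)
      have "ln r < - (M1 / \<epsilon>)" using re r0 by (metis ln_exp ln_less_cancel_iff exp_gt_zero)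
      hence "M1 < \<epsilon> * (- ln r)" using eps by (simp add: field_simps)
      hence "M1 / (- ln r) < \<epsilon>" using t0 by (simp add: field_simps)
      moreover have "f r = (- ln (measure \<mu> (ballPsi k A \<psi> x r))) / (- ln r)" unfolding f_def by simp
      ultimately have "\<bar>f r - g n\<bar> < \<epsilon>" using est g_eq[OF n1] unfolding M1_def by simp
      thus "\<exists>n\<ge>N. \<bar>f r - g n\<bar> < \<epsilon>" using Nn by (intro exI[of _ n]) simp
    qed
  qed
  have H2: "\<exists>N. \<forall>n\<ge>N. \<exists>r. 0 < r \<and> r < \<delta> \<and> \<bar>f r - g n\<bar> < \<epsilon>" if eps: "\<epsilon> > 0" and del: "\<delta> > 0" for \<epsilon> \<delta>
  proof -
    define G where "G = 1 + (C + C') / c"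
    define M2 where "M2 = ln C0 + h * G + h * C' / c"
    obtain N0 :: nat where N0: "real N0 > (C' + M2 / \<epsilon> + \<bar>ln \<delta>\<bar> + 1) / c" using reals_Archimedean2 by blast
    define N where "N = Suc N0"
    have G0: "G \<ge> 0" unfolding G_def using \<open>C \<ge> 0\<close> C'0 c0 by simp
    have M20: "M2 / \<epsilon> \<ge> 0" unfolding M2_def using C01 h0 G0 C'0 c0 eps by simp
    have "\<exists>r. 0 < r \<and> r < \<delta> \<and> \<bar>f r - g n\<bar> < \<epsilon>" if nN: "n \<ge> N" for n
    proof -
      have n1: "n \<ge> 1" using nN N_def by simp
      have "real n \<ge> real N0" using nN N_def by simp
      hence "c * real n > C' + M2 / \<epsilon> + \<bar>ln \<delta>\<bar> + 1" using N0 c0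
        by (smt (verit, ccfv_SIG) mult.commute mult_left_mono pos_divide_less_eq)
      hence big: "C' - c * real n < - (M2 / \<epsilon>) - \<bar>ln \<delta>\<bar> - 1" by linarith
      define r where "r = D n"
      have r0: "r > 0" using Dpos r_def by simp
      have "ln r \<le> C' - c * real n"
        using Dsmall[OF n1] r0 unfolding r_def by (metis ln_exp ln_le_cancel_iff exp_gt_zero)
      hence lnr: "ln r < - (M2 / \<epsilon>) - \<bar>ln \<delta>\<bar> - 1" using big by linarith
      have "ln r < ln \<delta>" using lnr M20 abs_ge_minus_self[of "ln \<delta>"] by linarith
      hence rd: "r < \<delta>" using r0 del by simp
      have "ln r < 0" using lnr M20 by linarith
      hence r1: "r < 1" using r0 by simp
      have M2e: "M2 / (- ln r) < \<epsilon>"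
      proof -
        have "M2 / \<epsilon> < - ln r" using lnr by linarith
        hence "M2 < \<epsilon> * (- ln r)" using eps by (simp add: field_simps)
        thus ?thesis using \<open>ln r < 0\<close> by (simp add: field_simps)
      qed
      define m where "m = mr r"
      have mn: "n < m"
      proof (rule ccontr)
        assume "\<not> n < m"
        hence "D n \<le> D m" using Danti by simp
        thus False using mr1[OF r0] r_def m_def by simp
      qed
      have gap: "c * (real m - 1 - real n) \<le> C + C'"
      proof -
        have m1n: "m - 1 \<ge> n" using mn by simp
        have "r \<le> D (m - 1)" using mr2[of "m - 1" r] mn m_def by simp
        moreover have "D (m - 1) \<le> exp (\<psi> (m - 1) x + C')" using Dup[of "m - 1"] n1 m1n by simp
        ultimately have "exp (\<psi> n x) \<le> exp (\<psi> (m - 1) x + C')" using Dlow[OF n1] r_def by linarith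
        hence e1: "\<psi> n x \<le> \<psi> (m - 1) x + C'" by simp
        show ?thesis
        proof (cases "m - 1 = n")
          case True
          hence "real m - 1 - real n = 0" using mn by linarith
          then show ?thesis using \<open>C \<ge> 0\<close> C'0 by simp
        next
          case False
          define j where "j = m - 1 - n"
          have j1: "j \<ge> 1" using False m1n j_def by simp
          have nj: "n + j = m - 1" using m1n j_def by simp
          have "\<bar>\<psi> (n + j) x - \<psi> n x - \<psi> j ((shift ^^ n) x)\<bar> \<le> C" using AA[OF xS n1 j1] .
          moreover have "\<psi> j ((shift ^^ n) x) \<le> - c * real j" using NEG[OF shS[OF xS] j1] .
          ultimately have "\<psi> (m - 1) x \<le> \<psi> n x - c * real j + C" using nj by (simp add: abs_le_iff)
          moreover have "real j = real m - 1 - real n" using j_def mn by simp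
          ultimately show ?thesis using e1 by (simp add: algebra_simps)
        qed
      qed
      have Gm: "real m - real n \<le> G" unfolding G_def using gap c0 by (simp add: field_simps)
      have tp1: "\<psi> n x \<le> ln r"
        using Dlow[OF n1] r0 unfolding r_def by (metis ln_exp ln_le_cancel_iff exp_gt_zero)
      have tp2: "ln r \<le> \<psi> n x + C'"
        using Dup[OF n1] r0 unfolding r_def by (metis ln_exp ln_le_cancel_iff exp_gt_zero)
      have t0: "- ln r > 0" using \<open>ln r < 0\<close> by simp
      have est: "\<bar>(- ln (measure \<mu> (ballPsi k A \<psi> x r))) / (- ln r) - h * real n / (- \<psi> n x)\<bar>
           \<le> (ln C0 + h * G + h * C' / c) / (- ln r)"
        by (rule est2[where m = "real m"]) (use t0 c0 n1 NEG[OF xS n1] tp1 tp2 lnmu[OF r0] h0 C'0 Gm mn m_def in auto)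
      moreover have "f r = (- ln (measure \<mu> (ballPsi k A \<psi> x r))) / (- ln r)" unfolding f_def by simp
      ultimately have "\<bar>f r - g n\<bar> < \<epsilon>" using M2e g_eq[OF n1] unfolding M2_def by simp
      thus ?thesis using r0 rd by blast
    qed
    thus ?thesis by blast
  qed
  have A1: "Liminf (at_right 0) (\<lambda>r. ereal (f r)) = Liminf sequentially (\<lambda>n. ereal (g n))"
    by (rule absA_liminf) (use H1 H2 in auto)
  have A2: "Limsup (at_right 0) (\<lambda>r. ereal (f r)) = Limsup sequentially (\<lambda>n. ereal (g n))"
    by (rule absA_limsup) (use H1 H2 in auto)
  have ev1: "eventually (\<lambda>n. ereal (- (B1 + C)) \<le> ereal (a n)) sequentially"
    unfolding eventually_sequentially using a_low by (intro exI[of _ 1]) auto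
  have ev2: "eventually (\<lambda>n. ereal (a n) \<le> ereal (- c)) sequentially"
    unfolding eventually_sequentially using a_up by (intro exI[of _ 1]) auto
  have lb1: "ereal (- (B1 + C)) \<le> Liminf sequentially (\<lambda>n. ereal (a n))" by (rule Liminf_bounded[OF ev1])
  have ub2: "Limsup sequentially (\<lambda>n. ereal (a n)) \<le> ereal (- c)" by (rule Limsup_bounded[OF ev2])
  have le12: "Liminf sequentially (\<lambda>n. ereal (a n)) \<le> Limsup sequentially (\<lambda>n. ereal (a n))"
    by (rule Liminf_le_Limsup) simp
  have ub1: "Liminf sequentially (\<lambda>n. ereal (a n)) \<le> ereal (- c)" using le12 ub2 by (rule order_trans)
  have lb2: "ereal (- (B1 + C)) \<le> Limsup sequentially (\<lambda>n. ereal (a n))" using lb1 le12 by (rule order_trans)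
  obtain l1 where l1: "Liminf sequentially (\<lambda>n. ereal (a n)) = ereal l1" "l1 \<le> - c"
    using lb1 ub1 by (cases "Liminf sequentially (\<lambda>n. ereal (a n))") auto
  obtain l2 where l2: "Limsup sequentially (\<lambda>n. ereal (a n)) = ereal l2" "l2 \<le> - c"
    using lb2 ub2 by (cases "Limsup sequentially (\<lambda>n. ereal (a n))") auto
  have mono\<phi>: "mono \<phi>"
  proof (rule monoI)
    fix t1 t2 :: real assume "t1 \<le> t2"
    hence u: "min t1 (- c) \<le> min t2 (- c)" by simp
    have neg: "min t2 (- c) < 0" using c0 by simp
    have "h / (- min t1 (- c)) \<le> h / (- min t2 (- c))"
    proof (rule divide_left_mono)
      show "- min t2 (- c) \<le> - min t1 (- c)" using u by simp
      show "0 \<le> h" by (fact h0)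
      have "min t1 (- c) < 0" using c0 by simp
      thus "0 < - min t1 (- c) * - min t2 (- c)" using neg by (intro mult_pos_pos) auto
    qed
    thus "\<phi> t1 \<le> \<phi> t2" unfolding \<phi>_def by simp
  qed
  have cont\<phi>: "isCont \<phi> t" for t
  proof -
    have "min t (- c) \<noteq> 0" using c0 by simp
    thus ?thesis unfolding \<phi>_def by (intro continuous_intros) auto
  qed
  have gdef: "(\<lambda>n. ereal (g n)) = (\<lambda>n. ereal (\<phi> (a n)))" unfolding g_def ..
  have adef: "(\<lambda>n. ereal (\<psi> n x / real n)) = (\<lambda>n. ereal (a n))" unfolding a_def ..
  have \<phi>l: "\<phi> l = - h / l" if "l \<le> - c" for l unfolding \<phi>_def using that by simp
  have fin: "ereal (- h / l) = - ereal (Q 0) / ereal l" if "l \<le> - c" for l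
    using that c0 Q0 by simp
  show ?thesis
  proof
    have "lower_local_dim k A \<psi> \<mu> x = Liminf (at_right 0) (\<lambda>r. ereal (f r))"
      unfolding lower_local_dim_def f_def ..
    also have "\<dots> = ereal (\<phi> l1)" unfolding A1 gdef by (rule absB_liminf[OF mono\<phi> cont\<phi> l1(1)])
    also have "\<dots> = - ereal (Q 0) / Liminf sequentially (\<lambda>n. ereal (\<psi> n x / real n))"
      unfolding adef l1(1) \<phi>l[OF l1(2)] fin[OF l1(2)] ..
    finally show "lower_local_dim k A \<psi> \<mu> x = - ereal (Q 0) / Liminf sequentially (\<lambda>n. ereal (\<psi> n x / real n))" .
  next
    have "upper_local_dim k A \<psi> \<mu> x = Limsup (at_right 0) (\<lambda>r. ereal (f r))"
      unfolding upper_local_dim_def f_def ..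
    also have "\<dots> = ereal (\<phi> l2)" unfolding A2 gdef by (rule absB_limsup[OF mono\<phi> cont\<phi> l2(1)])
    also have "\<dots> = - ereal (Q 0) / Limsup sequentially (\<lambda>n. ereal (\<psi> n x / real n))"
      unfolding adef l2(1) \<phi>l[OF l2(2)] fin[OF l2(2)] ..
    finally show "upper_local_dim k A \<psi> \<mu> x = - ereal (Q 0) / Limsup sequentially (\<lambda>n. ereal (\<psi> n x / real n))" .
  qed
qed


end
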